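(* Let $\mathrm{Aut}(\mathcal{NR})$ be the setwise stabiliser of the Nordstrom-Robinson code $\mathcal{NR}$ in $\mathrm{Aut}(\Gamma_{16})=T\rtimes L$, and let $\mu:\mathrm{Aut}(\mathcal{NR})\to S_{16}$ be the homomorphism $g\sigma\mapsto\sigma$ (for $g\in T$, $\sigma\in L$). Then the kernel of $\mu$ equals $T_{\mathcal{R}}=\{\beta\mapsto\beta+\alpha : \alpha\in\mathcal{R}\}$, the group of translations of $\mathbb{F}_2^{16}$ by elements of $\mathcal{R}$.
   Context: $\Gamma_{16}$ is the binary Hamming graph on $\mathbb{F}_2^{16}$; $\mathrm{Aut}(\Gamma_{16})=T\rtimes L$, where $T$ is the group of translations of $\mathbb{F}_2^{16}$ and $L\cong S_{16}$ is the group of coordinate permutations. Let $\mathcal{G}$ be the $[24,12,8]$ extended binary Golay code in $\mathbb{F}_2^{24}$, chosen so that $(1^8,0^{16})\in\mathcal{G}$. Let $J^*=\{1,\dots,8\}$, $J=\{9,\dots,24\}$, $\mathcal{D}^0=\{\alpha\in\mathcal{G}:\mathrm{supp}(\alpha)\cap J^*=\emptyset\}$ and, for $1\le i\le 7$, $\mathcal{D}^i=\{\alpha\in\mathcal{G}:\mathrm{supp}(\alpha)\cap J^*=\{i,8\}\}$. The Nordstrom-Robinson code $\mathcal{NR}\subseteq\mathbb{F}_2^{16}$ is the set of restrictions to the coordinates in $J$ of the vectors in $\bigcup_{i=0}^7\mathcal{D}^i$, and $\mathcal{R}\subseteq\mathcal{NR}$ is the set of restrictions to $J$ of the vectors in $\mathcal{D}^0$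 (this is the Reed–Muller code $R(1,4)$). *)

theory Defs
  imports Main "HOL-Combinatorics.Permutations"
begin

text \<open>Binary vectors of length n are modelled by their supports: a vector of
  F_2^24 is a subset of {1..24}, and addition is symmetric difference.
  The 16 coordinates of F_2^16 are identified with J = {9..24}.\<close>

definition vadd :: "nat set \<Rightarrow> nat set \<Rightarrow> nat set" where
  "vadd A B = (A - B) \<union> (B - A)"

definition Jstar :: "nat set" where "Jstar = {1..8}"
definition Jset :: "nat set" where "Jset = {9..24}"

definition golay_code :: "nat set set \<Rightarrow> bool" where
  "golay_code G \<longleftrightarrow> G \<subseteq> Pow {1..24} \<and> {} \<in> G \<and>
     (\<forall>a\<in>G. \<forall>b\<in>G. vadd a b \<in> G) \<and> card G = 2^12 \<and>
     (\<forall>a\<in>G. a \<noteq> {} \<longrightarrow> card a \<ge> 8)"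

definition Dcode :: "nat set set \<Rightarrow> nat \<Rightarrow> nat set set" where
  "Dcode G i = (if i = 0 then {a \<in> G. a \<inter> Jstar = {}}
                else {a \<in> G. a \<inter> Jstar = {i, 8}})"

definition NR :: "nat set set \<Rightarrow> nat set set" where
  "NR G = (\<lambda>a. a \<inter> Jset) ` (\<Union>i\<in>{0..7}. Dcode G i)"

definition RM :: "nat set set \<Rightarrow> nat set set" where
  "RM G = (\<lambda>a. a \<inter> Jset) ` Dcode G 0"

text \<open>The element g\<sigma> of Aut(Gamma_16) = T \<rtimes> L, with g translation by alpha.\<close>
definition aut_map :: "nat set \<Rightarrow> (nat \<Rightarrow> nat) \<Rightarrow> nat set \<Rightarrow> nat set" where
  "aut_map \<alpha> \<sigma> = (\<lambda>\<beta>. vadd (\<sigma> ` \<beta>) \<alpha>)"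

definition AutGamma16 :: "(nat set \<Rightarrow> nat set) set" where
  "AutGamma16 = {f. \<exists>\<alpha> \<sigma>. \<alpha> \<subseteq> Jset \<and> \<sigma> permutes Jset \<and> f = aut_map \<alpha> \<sigma>}"

definition AutNR :: "nat set set \<Rightarrow> (nat set \<Rightarrow> nat set) set" where
  "AutNR G = {f \<in> AutGamma16. f ` NR G = NR G}"

definition mu :: "(nat set \<Rightarrow> nat set) \<Rightarrow> (nat \<Rightarrow> nat)" where
  "mu f = (THE \<sigma>. \<sigma> permutes Jset \<and> (\<exists>\<alpha>. \<alpha> \<subseteq> Jset \<and> f = aut_map \<alpha> \<sigma>))"

definition T_R :: "nat set set \<Rightarrow> (nat set \<Rightarrow> nat set) set" where
  "T_R G = (\<lambda>\<alpha>. (\<lambda>\<beta>. vadd \<beta> \<alpha>)) ` RM G"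

end

theory Submission
  imports Defs
begin


lemma vadd_self_cancel[simp]: "vadd (vadd A B) B = A" unfolding vadd_def by auto
lemma vadd_empty[simp]: "vadd A {} = A" "vadd {} A = A" unfolding vadd_def by auto
lemma vadd_comm: "vadd A B = vadd B A" unfolding vadd_def by auto
lemma vadd_assoc: "vadd (vadd A B) C = vadd A (vadd B C)" unfolding vadd_def by auto
lemma vadd_Int: "vadd A B \<inter> S = vadd (A \<inter> S) (B \<inter> S)" unfolding vadd_def by auto

lemma card_vadd: "finite A \<Longrightarrow> finite B \<Longrightarrow> card (vadd A B) + 2 * card (A \<inter> B) = card A + card B"
proof -
  assume f: "finite A" "finite B"
  have "card (vadd A B) = card (A - B) + card (B - A)"
    unfolding vadd_def using f by (subst card_Un_disjoint) auto
  moreover have "card (A - B) = card A - card (A \<inter> B)" using f by (simp add: card_Diff_subset_Int)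
  moreover have "card (B - A) = card B - card (A \<inter> B)" using f by (simp add: card_Diff_subset_Int Int_commute)
  moreover have "card (A \<inter> B) \<le> card A" "card (A \<inter> B) \<le> card B" using f by (auto intro: card_mono)
  ultimately show ?thesis by linarith
qed

lemma small_subsets_card:
  assumes "finite U" "card U = 23"
  shows "card {d \<in> Pow U. card d \<le> 3} = 2048"
proof -
  have eq: "{d \<in> Pow U. card d \<le> 3} = (\<Union>k\<in>{..3::nat}. {d. d \<subseteq> U \<and> card d = k})" by auto
  have "card (\<Union>k\<in>{..3::nat}. {d. d \<subseteq> U \<and> card d = k}) = (\<Sum>k\<in>{..3::nat}. card {d. d \<subseteq> U \<and> card d = k})"
    by (rule card_UN_disjoint) (auto intro: finite_subset[of _ "Pow U"] simp: assms)
  also have "\<dots> = (\<Sum>k\<in>{..3::nat}. 23 choose k)" using n_subsets[OF assms(1)] assms(2) by simp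
  also have "\<dots> = 2048" by (simp add: numeral_eq_Suc binomial_Suc_Suc)
  finally show ?thesis using eq by simp
qed
lemma vadd_card_le: "finite A \<Longrightarrow> finite B \<Longrightarrow> card (vadd A B) \<le> card A + card B"
  unfolding vadd_def by (rule order_trans[OF card_mono card_Un_le]) auto

lemma vadd_eq_empty: "vadd A B = {} \<longleftrightarrow> A = B" unfolding vadd_def by auto

lemma ball_card:
  assumes "finite U" "card U = 23" "C \<subseteq> U"
  shows "card {x \<in> Pow U. card (vadd x C) \<le> 3} = 2048"
proof -
  have "{x \<in> Pow U. card (vadd x C) \<le> 3} = (\<lambda>d. vadd d C) ` {d \<in> Pow U. card d \<le> 3}"
  proof (rule set_eqI, rule iffI)
    fix x assume x: "x \<in> {x \<in> Pow U. card (vadd x C) \<le> 3}"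
    have "x = vadd (vadd x C) C" by simp
    moreover have "vadd x C \<in> {d \<in> Pow U. card d \<le> 3}" using x assms(3) unfolding vadd_def by auto
    ultimately show "x \<in> (\<lambda>d. vadd d C) ` {d \<in> Pow U. card d \<le> 3}" by blast
  next
    fix x assume "x \<in> (\<lambda>d. vadd d C) ` {d \<in> Pow U. card d \<le> 3}"
    then obtain d where "d \<in> Pow U" "card d \<le> 3" "x = vadd d C" by auto
    moreover have "x \<subseteq> U" using calculation assms(3) unfolding vadd_def by auto
    ultimately show "x \<in> {x \<in> Pow U. card (vadd x C) \<le> 3}" by simp
  qed
  moreover have "inj_on (\<lambda>d. vadd d C) S" for S by (rule inj_onI) (metis vadd_self_cancel)
  ultimately show ?thesis using small_subsets_card[OF assms(1,2)] by (simp add: card_image)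
qed

lemma golay_finite: "golay_code G \<Longrightarrow> c \<in> G \<Longrightarrow> finite c \<and> c \<subseteq> {1..24}"
  unfolding golay_code_def by (auto intro: finite_subset)

lemma covering:
  assumes G: "golay_code G" and y: "y \<in> {1..24::nat}" and X: "X \<subseteq> {1..24} - {y}"
  shows "\<exists>c\<in>G. card (vadd X (c - {y})) \<le> 3"
proof (rule ccontr)
  assume nc: "\<not> ?thesis"
  define U where "U = {1..24::nat} - {y}"
  have fU: "finite U" unfolding U_def by simp
  have cU: "card U = 23" unfolding U_def using y by simp
  define B where "B c = {x \<in> Pow U. card (vadd x (c - {y})) \<le> 3}" for c
  have fG: "finite G" using G unfolding golay_code_def by (metis card.infinite zero_neq_numeral power_not_zero)
  have cG: "card G = 4096" using G unfolding golay_code_def by simp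
  have cB: "card (B c) = 2048" if "c \<in> G" for c
    unfolding B_def using ball_card[OF fU cU] golay_finite[OF G that] unfolding U_def by blast
  have disj: "B c \<inter> B c' = {}" if "c \<in> G" "c' \<in> G" "c \<noteq> c'" for c c'
  proof (rule ccontr)
    assume "B c \<inter> B c' \<noteq> {}"
    then obtain x where x: "x \<in> B c" "x \<in> B c'" by blast
    have fx: "finite x" using x fU unfolding B_def by (auto intro: finite_subset)
    have fc: "finite c" "finite c'" using golay_finite[OF G] that by auto
    have e: "vadd (c - {y}) (c' - {y}) = vadd (vadd x (c - {y})) (vadd x (c' - {y}))"
      unfolding vadd_def by auto
    have "card (vadd (c - {y}) (c' - {y})) \<le> 6"
      unfolding e using x fx fc
      by (intro order_trans[OF vadd_card_le]) (auto simp: B_def vadd_def)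
    moreover have "vadd c c' \<subseteq> insert y (vadd (c - {y}) (c' - {y}))" unfolding vadd_def by auto
    moreover have "card (insert y (vadd (c - {y}) (c' - {y}))) \<le> card (vadd (c - {y}) (c' - {y})) + 1"
      using fc by (simp add: card_insert_if vadd_def)
    moreover have "card (vadd c c') \<le> card (insert y (vadd (c - {y}) (c' - {y})))"
      using fc calculation(2) by (intro card_mono) (auto simp: vadd_def)
    ultimately have le7: "card (vadd c c') \<le> 7" by linarith
    have "vadd c c' \<in> G" "vadd c c' \<noteq> {}" using G that unfolding golay_code_def
      by (auto simp: vadd_eq_empty)
    hence "8 \<le> card (vadd c c')" using G unfolding golay_code_def by blast
    with le7 show False by linarith
  qed
  have "card (\<Union>(B ` G)) = (\<Sum>c\<in>G. card (B c))"
    by (rule card_UN_disjoint) (use fG disj fU in \<open>auto simp: B_def intro: finite_subset[of _ "Pow U"]\<close>)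
  also have "\<dots> = 4096 * 2048" using cB cG by simp
  finally have c1: "card (\<Union>(B ` G)) = 4096 * 2048" .
  have "\<Union>(B ` G) \<subseteq> Pow U - {X}" using nc unfolding B_def by auto
  hence "card (\<Union>(B ` G)) \<le> card (Pow U - {X})" using fU by (intro card_mono) auto
  also have "\<dots> = 2^23 - 1" using X fU cU by (simp add: card_Pow U_def)
  finally show False using c1 by simp
qed

lemma four_subset:
  assumes G: "golay_code G" and J: "Jstar \<in> G" and X: "X \<subseteq> Jstar" "card X = 4"
  shows "\<exists>c\<in>G. c \<inter> Jstar = X"
proof -
  have Xs: "X \<subseteq> {1..24} - {9::nat}" using X(1) unfolding Jstar_def by auto
  obtain c where c: "c \<in> G" "card (vadd X (c - {9})) \<le> 3"
    using covering[OF G _ Xs] by auto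
  have fc: "finite c" using golay_finite[OF G c(1)] by simp
  have fX: "finite X" using X(1) unfolding Jstar_def by (auto intro: finite_subset)
  have "c \<noteq> {}" using c(2) X(2) by auto
  hence c8: "card c \<ge> 8" using G c(1) unfolding golay_code_def by blast
  have cC: "card (c - {9}) \<ge> 7" using c8 fc by (auto simp: card_Diff_singleton_if)
  have cv: "card (vadd X (c - {9})) + 2 * card (X \<inter> (c - {9})) = 4 + card (c - {9})"
    using card_vadd[OF fX, of "c - {9}"] fc X(2) by simp
  have "card (X \<inter> (c - {9})) \<le> 4" using X(2) fX card_mono[OF fX Int_lower1, of "c - {9}"] by simp
  hence m4: "card (X \<inter> (c - {9})) = 4" and c7: "card (c - {9}) = 7" using cv c(2) cC by linarith+
  have "X \<inter> (c - {9}) = X" using m4 X(2) fX by (intro card_subset_eq) auto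
  hence XC: "X \<subseteq> c - {9}" by blast
  have y: "9 \<in> c"
  proof (rule ccontr)
    assume "9 \<notin> c" hence "c - {9} = c" by auto
    with c7 c8 show False by simp
  qed
  have cc: "card c = 8" using c7 y fc by (simp add: card_Diff_singleton)
  have vG: "vadd c Jstar \<in> G" using G c(1) J unfolding golay_code_def by blast
  have "9 \<in> vadd c Jstar" using y unfolding vadd_def Jstar_def by auto
  hence "card (vadd c Jstar) \<ge> 8" using vG G unfolding golay_code_def by blast
  moreover have "card (vadd c Jstar) + 2 * card (c \<inter> Jstar) = 16"
    using card_vadd[OF fc, of Jstar] cc by (simp add: Jstar_def)
  ultimately have "card (c \<inter> Jstar) \<le> 4" by linarith
  moreover have "X \<subseteq> c \<inter> Jstar" using XC X(1) by auto
  ultimately have "X = c \<inter> Jstar" using X(2) fc by (intro card_seteq) auto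
  thus ?thesis using c(1) by blast
qed

lemma pair_word:
  assumes G: "golay_code G" and J: "Jstar \<in> G" and j: "j \<in> {1,2::nat}"
  shows "\<exists>d\<in>G. d \<inter> Jstar = {j,8}"
proof -
  have "{j,3,4,5} \<subseteq> Jstar" "card {j,3,4,5} = 4" using j by (auto simp: Jstar_def)
  then obtain c1 where c1: "c1 \<in> G" "c1 \<inter> Jstar = {j,3,4,5}" using four_subset[OF G J] by blast
  have "{8,3,4,5} \<subseteq> Jstar" "card {8::nat,3,4,5} = 4" by (auto simp: Jstar_def)
  then obtain c2 where c2: "c2 \<in> G" "c2 \<inter> Jstar = {8,3,4,5}" using four_subset[OF G J] by blast
  have "vadd c1 c2 \<in> G" using G c1 c2 unfolding golay_code_def by blast
  moreover have "vadd c1 c2 \<inter> Jstar = {j,8}" unfolding vadd_Int c1 c2 using j by (auto simp: vadd_def)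
  ultimately show ?thesis by blast
qed


lemma aut_map_inj:
  assumes "aut_map \<alpha> \<sigma> = aut_map \<alpha>' \<sigma>'"
  shows "\<sigma> = \<sigma>'"
proof
  fix x
  have a: "\<alpha> = \<alpha>'" using fun_cong[OF assms, of "{}"] by (simp add: aut_map_def)
  have "vadd {\<sigma> x} \<alpha> = vadd {\<sigma>' x} \<alpha>" using fun_cong[OF assms, of "{x}"] a by (simp add: aut_map_def)
  hence "vadd (vadd {\<sigma> x} \<alpha>) \<alpha> = vadd (vadd {\<sigma>' x} \<alpha>) \<alpha>" by simp
  thus "\<sigma> x = \<sigma>' x" by simp
qed

lemma mu_eq:
  assumes "\<sigma> permutes Jset" "\<alpha> \<subseteq> Jset"
  shows "mu (aut_map \<alpha> \<sigma>) = \<sigma>"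
  unfolding mu_def
  by (rule the_equality) (use assms aut_map_inj in blast)+

lemma aut_id: "aut_map \<alpha> id = (\<lambda>\<beta>. vadd \<beta> \<alpha>)"
  by (simp add: aut_map_def)

lemma empty_NR: "golay_code G \<Longrightarrow> {} \<in> NR G"
  unfolding NR_def Dcode_def golay_code_def by force

theorem lemma3p1:
  fixes G :: "nat set set"
  assumes "golay_code G" and "Jstar \<in> G"
  shows "{f \<in> AutNR G. mu f = id} = T_R G"
proof (rule set_eqI, rule iffI)
  fix f assume "f \<in> {f \<in> AutNR G. mu f = id}"
  then have fA: "f \<in> AutGamma16" "f ` NR G = NR G" "mu f = id" by (auto simp: AutNR_def)
  then obtain \<alpha> \<sigma> where a: "\<alpha> \<subseteq> Jset" "\<sigma> permutes Jset" "f = aut_map \<alpha> \<sigma>"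
    by (auto simp: AutGamma16_def)
  have "\<sigma> = id" using mu_eq[OF a(2,1)] a(3) fA(3) by simp
  hence f: "f = (\<lambda>\<beta>. vadd \<beta> \<alpha>)" using a(3) aut_id by simp
  have "f {} \<in> NR G" using fA(2) empty_NR[OF assms(1)] by blast
  hence "\<alpha> \<in> NR G" using f by simp
  then obtain a i where ai: "i \<in> {0..7}" "a \<in> Dcode G i" "\<alpha> = a \<inter> Jset" unfolding NR_def by auto
  show "f \<in> T_R G"
  proof (cases "i = 0")
    case True
    then have "\<alpha> \<in> RM G" using ai unfolding RM_def by auto
    thus ?thesis using f unfolding T_R_def by blast
  next
    case False
    hence aG: "a \<in> G" "a \<inter> Jstar = {i,8}" "i \<in> {1..7}" using ai by (auto simp: Dcode_def)
    obtain j where j: "j \<in> {1,2::nat}" "j \<noteq> i" by (cases "i = 1") auto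
    obtain d where d: "d \<in> G" "d \<inter> Jstar = {j,8}" using pair_word[OF assms j(1)] by blast
    have "d \<in> Dcode G j" using d j by (auto simp: Dcode_def)
    hence "d \<inter> Jset \<in> NR G" unfolding NR_def using j by force
    hence "f (d \<inter> Jset) \<in> NR G" using fA(2) by blast
    then obtain e k where ek: "k \<in> {0..7}" "e \<in> Dcode G k" "vadd (d \<inter> Jset) \<alpha> = e \<inter> Jset"
      unfolding NR_def f by auto
    have eG: "e \<in> G" "e \<inter> Jstar = {} \<or> e \<inter> Jstar = {k,8}" using ek by (auto simp: Dcode_def split: if_splits)
    define w where "w = vadd (vadd d a) e"
    have cl: "\<forall>a\<in>G. \<forall>b\<in>G. vadd a b \<in> G" using assms(1) unfolding golay_code_def by blast
    have wG: "w \<in> G" using cl d(1) aG(1) eG(1) unfolding w_def by simp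
    have vs: "vadd A A = {}" for A :: "nat set" by (simp add: vadd_def)
    have A: "w \<inter> Jset = {}" unfolding w_def vadd_Int using ek(3) ai(3) vs by simp
    have B: "w \<subseteq> {1..24}" using golay_finite[OF assms(1) wG] by blast
    have "x \<in> Jstar" if "x \<in> w" for x
    proof -
      have "x \<in> {1..24}" using B that by blast
      moreover have "x \<notin> Jset" using A that by blast
      ultimately show ?thesis unfolding Jstar_def Jset_def by simp
    qed
    hence wJ: "w = w \<inter> Jstar" by blast
    have wJ2: "w \<inter> Jstar = vadd (vadd {j,8} {i,8}) (e \<inter> Jstar)" unfolding w_def vadd_Int d aG ..
    have weq: "w = vadd (vadd {j,8} {i,8}) (e \<inter> Jstar)" using wJ wJ2 by (rule trans)
    have ij: "vadd {j,8} {i,8} = {i,j}" using j aG(3) by (auto simp: vadd_def)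
    have "w \<subseteq> {i,j,k,8} \<and> w \<noteq> {}"
    proof (cases "e \<inter> Jstar = {}")
      case True thus ?thesis using weq ij by simp
    next
      case False
      hence "e \<inter> Jstar = {k,8}" using eG(2) by blast
      hence "w = vadd {i,j} {k,8}" using weq ij by simp
      moreover have "8 \<in> vadd {i,j} {k,8}" using j aG(3) by (auto simp: vadd_def)
      moreover have "vadd {i,j} {k,8} \<subseteq> {i,j,k,8}" by (auto simp: vadd_def)
      ultimately show ?thesis by blast
    qed
    hence "w \<subseteq> {i,j,k,8}" "w \<noteq> {}" by blast+
    have m8: "\<forall>a\<in>G. a \<noteq> {} \<longrightarrow> card a \<ge> 8" using assms(1) unfolding golay_code_def by blast
    have "card w \<le> card {i,j,k,8}" using \<open>w \<subseteq> {i,j,k,8}\<close> by (intro card_mono) auto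
    also have "\<dots> \<le> 4" by (simp add: card_insert_if)
    finally have c4: "card w \<le> 4" .
    have "card w \<ge> 8" using m8 wG \<open>w \<noteq> {}\<close> by blast
    with c4 have False by linarith
    thus ?thesis by blast
  qed
next
  fix f assume "f \<in> T_R G"
  then obtain r where r: "r \<in> Dcode G 0" "f = (\<lambda>\<beta>. vadd \<beta> (r \<inter> Jset))" unfolding T_R_def RM_def by auto
  have rG: "r \<in> G" "r \<inter> Jstar = {}" using r by (auto simp: Dcode_def)
  have sub: "f x \<in> NR G" if xN: "x \<in> NR G" for x
  proof -
    obtain a i where ai: "i \<in> {0..7}" "a \<in> Dcode G i" "x = a \<inter> Jset" using xN unfolding NR_def by blast
    have cl: "\<forall>a\<in>G. \<forall>b\<in>G. vadd a b \<in> G" using assms(1) unfolding golay_code_def by blast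
    have "a \<in> G" using ai(2) by (simp add: Dcode_def split: if_splits)
    hence "vadd a r \<in> G" using cl rG(1) by simp
    moreover have "vadd a r \<inter> Jstar = a \<inter> Jstar" unfolding vadd_Int rG by simp
    ultimately have "vadd a r \<in> Dcode G i" using ai(2) by (simp add: Dcode_def split: if_splits)
    hence U: "vadd a r \<in> (\<Union>i\<in>{0..7}. Dcode G i)" using ai(1) by blast
    have eq: "vadd a r \<inter> Jset = f x" unfolding vadd_Int r(2) ai(3) by simp
    show ?thesis unfolding NR_def by (rule image_eqI[where f="\<lambda>a. a \<inter> Jset", OF sym[OF eq] U])
  qed
  have "f ` NR G = NR G"
  proof
    show "f ` NR G \<subseteq> NR G" using sub by blast
    show "NR G \<subseteq> f ` NR G"
    proof
      fix x assume "x \<in> NR G"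
      moreover have "x = f (f x)" using r(2) by simp
      ultimately show "x \<in> f ` NR G" using sub by blast
    qed
  qed
  moreover have "r \<inter> Jset \<subseteq> Jset" by blast
  moreover have "f = aut_map (r \<inter> Jset) id" using r(2) aut_id by simp
  moreover have "id permutes Jset" by (rule permutes_id)
  ultimately have "f \<in> AutGamma16" "f ` NR G = NR G" "mu f = id"
    unfolding AutGamma16_def using mu_eq[OF permutes_id] by blast+
  thus "f \<in> {f \<in> AutNR G. mu f = id}" unfolding AutNR_def by blast
qed
end
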